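(* Let $\phi_1,\dots,\phi_N\in\mathbb{R}^d$ (not all zero) and $\theta^*\in\mathbb{R}^d$; set $\pi_i^*=\sigma(\phi_i^\top\theta^* )$, and for $\theta\in\mathbb{R}^d$ set $\pi_i=\sigma(\phi_i^\top\theta)$ and $\mathcal{L}(\theta)=\frac1N\sum_{i=1}^N(\pi_i-\pi_i^* )^2$. Let $u(\theta)=\min_i\pi_i(1-\pi_i)$, $v=\min_i\pi_i^*(1-\pi_i^* )$, and $\lambda_\phi$ the smallest positive eigenvalue of $\frac1N\sum_i\phi_i\phi_i^\top$. Then for all $\theta\in\mathbb{R}^d$, $$\Big\|\frac{\partial\mathcal{L}(\theta)}{\partial\theta}\Big\|_2\ge 8\,u(\theta)\min\{u(\theta),v\}\sqrt{\lambda_\phi}\Big[\frac1N\sum_{i=1}^N(\pi_i-\pi_i^* )^2\Big]^{1/2}.$$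
   Context: $\sigma(z)=1/(1+e^{-z})$ is the sigmoid function. *)

theory Defs
  imports "HOL-Analysis.Analysis"
begin

definition sigmoid :: "real \<Rightarrow> real" where
  "sigmoid z = 1 / (1 + exp (- z))"

definition is_eigenvalue :: "real^'n^'n \<Rightarrow> real \<Rightarrow> bool" where
  "is_eigenvalue A l \<longleftrightarrow> (\<exists>x. x \<noteq> 0 \<and> A *v x = l *\<^sub>R x)"

definition min_pos_eigenvalue :: "real^'n^'n \<Rightarrow> real" where
  "min_pos_eigenvalue A = Inf {l. l > 0 \<and> is_eigenvalue A l}"

definition second_moment :: "nat \<Rightarrow> (nat \<Rightarrow> real^'d) \<Rightarrow> real^'d^'d" where
  "second_moment N phi = (\<chi> j k. (1 / real N) * (\<Sum>i<N. phi i $ j * phi i $ k))"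

definition loss :: "nat \<Rightarrow> (nat \<Rightarrow> real^'d) \<Rightarrow> real^'d \<Rightarrow> real^'d \<Rightarrow> real" where
  "loss N phi \<theta>s \<theta> = (1 / real N) * (\<Sum>i<N. (sigmoid (phi i \<bullet> \<theta>) - sigmoid (phi i \<bullet> \<theta>s))\<^sup>2)"

definition u_min :: "nat \<Rightarrow> (nat \<Rightarrow> real^'d) \<Rightarrow> real^'d \<Rightarrow> real" where
  "u_min N phi \<theta> = Min ((\<lambda>i. sigmoid (phi i \<bullet> \<theta>) * (1 - sigmoid (phi i \<bullet> \<theta>))) ` {..<N})"

end

theory Submission imports Defs begin

definition sd :: "real \<Rightarrow> real" where "sd z = sigmoid z * (1 - sigmoid z)"

lemma sigmoid_bounds: "0 < sigmoid z" "sigmoid z < 1"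
  unfolding sigmoid_def by (auto simp: add_pos_pos)

lemma sd_nonneg: "0 \<le> sd z" unfolding sd_def using sigmoid_bounds[of z] by auto

lemma sd_le: "sd z \<le> 1/4"
proof -
  have "0 \<le> (sigmoid z - 1/2)^2" by simp
  then show ?thesis unfolding sd_def by (simp add: power2_eq_square algebra_simps)
qed

lemma sigmoid_deriv: "DERIV sigmoid z :> sd z"
proof -
  have "DERIV (\<lambda>z. 1 / (1 + exp (- z))) z :> exp (-z) / (1 + exp (-z))^2"
  proof -
    have "1 + exp (-z) \<noteq> 0" by (smt (verit) exp_gt_zero)
    then show ?thesis by (auto intro!: derivative_eq_intros simp: power2_eq_square)
  qed
  moreover have "exp (-z) / (1 + exp (-z))^2 = sd z"
    unfolding sd_def sigmoid_def
    by (simp add: field_simps power2_eq_square add_pos_pos[THEN less_imp_neq, THEN not_sym])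
  ultimately show ?thesis unfolding sigmoid_def[abs_def] by simp
qed

lemma sigmoid_mono: "x \<le> y \<Longrightarrow> sigmoid x \<le> sigmoid y"
  unfolding sigmoid_def by (simp add: frac_le add_pos_pos)

lemma concave_min: assumes "p1 \<le> p" "p \<le> p2"
  shows "min (p1*(1-p1)) (p2*(1-p2)) \<le> p*(1-(p::real))"
proof (cases "1 - p - p1 \<ge> 0")
  case True
  have "p*(1-p) - p1*(1-p1) = (p-p1)*(1-p-p1)" by algebra
  moreover have "(p-p1)*(1-p-p1) \<ge> 0" using True assms by simp
  ultimately show ?thesis by linarith
next
  case False
  have "p*(1-p) - p2*(1-p2) = (p2-p)*(p+p2-1)" by algebra
  moreover have "(p2-p)*(p+p2-1) \<ge> 0" using False assms by simp
  ultimately show ?thesis by linarith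
qed

lemma sd_between: "x \<le> z \<Longrightarrow> z \<le> y \<Longrightarrow> min (sd x) (sd y) \<le> sd z"
  unfolding sd_def using concave_min sigmoid_mono by blast

lemma sigmoid_diff: "\<exists>d. sigmoid x - sigmoid y = d * (x - y) \<and> min (sd x) (sd y) \<le> d \<and> d \<le> 1/4"
proof -
  consider "x = y" | "y < x" | "x < y" by linarith
  then show ?thesis
  proof cases
    case 1 then show ?thesis using sd_le[of x] by (intro exI[of _ "sd x"]) auto
  next
    case 2
    from MVT2[OF 2, of sigmoid sd] sigmoid_deriv obtain z where
      "y < z" "z < x" "sigmoid x - sigmoid y = (x - y) * sd z" by blast
    then show ?thesis using sd_between[of y z x] sd_le[of z]
      by (intro exI[of _ "sd z"]) (auto simp: min.commute)
  next
    case 3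
    from MVT2[OF 3, of sigmoid sd] sigmoid_deriv obtain z where
      "x < z" "z < y" "sigmoid y - sigmoid x = (y - x) * sd z" by blast
    then show ?thesis using sd_between[of x z y] sd_le[of z]
      by (intro exI[of _ "sd z"]) (auto simp: algebra_simps)
  qed
qed


lemma sm_mult: "second_moment N phi *v x = (1 / real N) *\<^sub>R (\<Sum>i<N. (phi i \<bullet> x) *\<^sub>R phi i)"
  unfolding second_moment_def
  by (simp add: vec_eq_iff matrix_vector_mult_def inner_vec_def sum_distrib_left sum_distrib_right
      sum.swap[of _ "{..<N}"] algebra_simps)

lemma Q_scale: "(\<Sum>i<N. (phi i \<bullet> (c *\<^sub>R x))\<^sup>2) = c^2 * (\<Sum>i<N. (phi i \<bullet> (x::real^'d))\<^sup>2)"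
  by (simp add: sum_distrib_left power_mult_distrib)

lemma rayleigh:
  fixes phi :: "nat \<Rightarrow> real^'d"
  assumes ex: "\<exists>i<N. phi i \<noteq> 0"
  shows "\<exists>\<mu>>0. is_eigenvalue (second_moment N phi) (\<mu> / real N) \<and>
     (\<forall>x\<in>span (phi ` {..<N}). \<mu> * (norm x)\<^sup>2 \<le> (\<Sum>i<N. (phi i \<bullet> x)\<^sup>2))"
proof -
  define V where "V = span (phi ` {..<N})"
  define Q where "Q x = (\<Sum>i<N. (phi i \<bullet> x)\<^sup>2)" for x
  define K where "K = V \<inter> sphere 0 1"
  obtain i0 where i0: "i0 < N" "phi i0 \<noteq> 0" using ex by blast
  have subV: "subspace V" unfolding V_def by simp
  have "compact K" unfolding K_def using closed_subspace[OF subV] by (metis Int_commute compact_Int_closed compact_sphere)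
  moreover have "(1 / norm (phi i0)) *\<^sub>R phi i0 \<in> K"
    unfolding K_def V_def using i0 by (auto intro: span_mul span_base)
  then have "K \<noteq> {}" by blast
  moreover have "continuous_on K Q" unfolding Q_def by (intro continuous_intros)
  ultimately obtain x0 where x0: "x0 \<in> K" and min: "\<And>y. y \<in> K \<Longrightarrow> Q x0 \<le> Q y"
    using continuous_attains_inf by metis
  define \<mu> where "\<mu> = Q x0"
  have x0V: "x0 \<in> V" and nx0: "norm x0 = 1" using x0 unfolding K_def by auto
  have ray: "\<mu> * (norm x)\<^sup>2 \<le> Q x" if "x \<in> V" for x
  proof (cases "x = 0")
    case True then show ?thesis by (simp add: Q_def)
  next
    case False
    have "(1 / norm x) *\<^sub>R x \<in> K" using that False unfolding K_def
      by (auto intro: subspace_mul[OF subV])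
    then have "\<mu> \<le> Q ((1 / norm x) *\<^sub>R x)" using min unfolding \<mu>_def by blast
    also have "\<dots> = Q x / (norm x)\<^sup>2" unfolding Q_def Q_scale by (simp add: power_divide field_simps)
    finally show ?thesis using False by (simp add: field_simps)
  qed
  have Qnn: "0 \<le> Q x" for x unfolding Q_def by (simp add: sum_nonneg)
  have mupos: "\<mu> > 0"
  proof (rule ccontr)
    assume "\<not> \<mu> > 0"
    then have "Q x0 = 0" using Qnn[of x0] unfolding \<mu>_def by linarith
    then have "\<forall>i\<in>{..<N}. (phi i \<bullet> x0)\<^sup>2 = 0" unfolding Q_def
      by (subst sum_nonneg_eq_0_iff[symmetric]) auto
    then have "\<And>y. y \<in> phi ` {..<N} \<Longrightarrow> orthogonal x0 y" by (auto simp: orthogonal_def inner_commute)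
    then have "orthogonal x0 x0" using orthogonal_to_span x0V unfolding V_def by blast
    then show False using nx0 by (simp add: orthogonal_def)
  qed
  define s where "s = (\<Sum>i<N. (phi i \<bullet> x0) *\<^sub>R phi i)"
  define r where "r = s - \<mu> *\<^sub>R x0"
  have sV: "s \<in> V" unfolding s_def V_def by (intro span_sum span_mul span_base) auto
  have rV: "r \<in> V" unfolding r_def using sV x0V subV by (simp add: subspace_diff subspace_mul)
  define k where "k = Q r - \<mu> * (norm r)\<^sup>2"
  have k0: "k \<ge> 0" using ray[OF rV] unfolding k_def by simp
  have expand: "Q (x0 + t *\<^sub>R r) - \<mu> * (norm (x0 + t *\<^sub>R r))\<^sup>2 = 2 * t * (r \<bullet> r) + t^2 * k" for t
  proof -
    have "Q (x0 + t *\<^sub>R r) = Q x0 + 2 * t * (\<Sum>i<N. (phi i \<bullet> x0) * (phi i \<bullet> r)) + t^2 * Q r"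
      unfolding Q_def by (simp add: inner_add_right power2_sum sum.distrib sum_distrib_left
          power_mult_distrib algebra_simps)
    moreover have "(\<Sum>i<N. (phi i \<bullet> x0) * (phi i \<bullet> r)) = s \<bullet> r"
      unfolding s_def by (simp add: inner_sum_left)
    moreover have "s = r + \<mu> *\<^sub>R x0" unfolding r_def by simp
    moreover have "(norm (x0 + t *\<^sub>R r))\<^sup>2 = 1 + 2 * t * (x0 \<bullet> r) + t^2 * (norm r)\<^sup>2"
    proof -
      have "(norm (x0 + t *\<^sub>R r))\<^sup>2 = (x0 + t *\<^sub>R r) \<bullet> (x0 + t *\<^sub>R r)" by (rule power2_norm_eq_inner)
      also have "\<dots> = x0 \<bullet> x0 + 2 * t * (x0 \<bullet> r) + t^2 * (r \<bullet> r)"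
        by (simp add: inner_add_left inner_add_right inner_commute power2_eq_square algebra_simps)
      also have "x0 \<bullet> x0 = 1" using nx0 by (simp add: power2_norm_eq_inner[symmetric])
      also have "r \<bullet> r = (norm r)\<^sup>2" by (simp add: power2_norm_eq_inner)
      finally show ?thesis .
    qed
    ultimately show ?thesis unfolding k_def \<mu>_def
      by (simp add: inner_add_left algebra_simps power2_eq_square)
  qed
  have r0: "r = 0"
  proof (rule ccontr)
    assume "r \<noteq> 0"
    then have rr: "r \<bullet> r > 0" by simp
    define t where "t = - (r \<bullet> r) / (k + 1)"
    have "x0 + t *\<^sub>R r \<in> V" using x0V rV subV by (simp add: subspace_add subspace_mul)
    then have "0 \<le> 2 * t * (r \<bullet> r) + t^2 * k" using ray expand[of t] by smt
    moreover have "2 * t * (r \<bullet> r) + t^2 * k = t * (2 * (r \<bullet> r) + t * k)" by (simp add: power2_eq_square algebra_simps)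
    moreover have "t < 0" unfolding t_def using rr k0 by (simp add: divide_pos_pos)
    moreover have "t * k \<ge> - (r \<bullet> r)"
    proof -
      have "t * k = - (r \<bullet> r) * (k / (k+1))" unfolding t_def by (simp add: field_simps)
      moreover have "k / (k+1) \<le> 1" using k0 by simp
      moreover have "(r \<bullet> r) * (k/(k+1)) \<le> (r \<bullet> r) * 1" by (rule mult_left_mono) (use rr \<open>k/(k+1) \<le> 1\<close> in auto)
      ultimately show ?thesis by linarith
    qed
    moreover have "2 * (r \<bullet> r) + t * k > 0" using rr \<open>t * k \<ge> - (r \<bullet> r)\<close> by linarith
    ultimately show False using mult_neg_pos[of t "2 * (r \<bullet> r) + t * k"] by linarith
  qed
  have "second_moment N phi *v x0 = (\<mu> / real N) *\<^sub>R x0"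
    using r0 unfolding sm_mult r_def s_def[symmetric] by simp
  moreover have "x0 \<noteq> 0" using nx0 by auto
  ultimately have "is_eigenvalue (second_moment N phi) (\<mu> / real N)"
    unfolding is_eigenvalue_def by blast
  then show ?thesis using mupos ray unfolding V_def Q_def by blast
qed


lemma sig_has_der: "((\<lambda>\<theta>. sigmoid (p \<bullet> \<theta>)) has_derivative (\<lambda>h. sd (p \<bullet> \<theta>) * (p \<bullet> h))) (at \<theta>)"
proof -
  have "((\<lambda>\<theta>. p \<bullet> \<theta>) has_derivative (\<lambda>h. p \<bullet> h)) (at \<theta>)"
    by (auto intro!: derivative_eq_intros)
  from has_derivative_compose[OF this sigmoid_deriv[unfolded has_field_derivative_def]]
  show ?thesis by simp
qed

lemma loss_gderiv:
  fixes phi :: "nat \<Rightarrow> real^'d"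
  shows "GDERIV (loss N phi \<theta>s) \<theta> :> ((2 / real N) *\<^sub>R (\<Sum>i<N. ((sigmoid (phi i \<bullet> \<theta>) - sigmoid (phi i \<bullet> \<theta>s)) * sd (phi i \<bullet> \<theta>)) *\<^sub>R phi i))"
proof -
  have eq: "loss N phi \<theta>s = (\<lambda>\<theta>. (1 / real N) * (\<Sum>i<N. (sigmoid (phi i \<bullet> \<theta>) - sigmoid (phi i \<bullet> \<theta>s))\<^sup>2))"
    by (rule ext) (simp add: loss_def)
  show ?thesis unfolding gderiv_def eq
    apply (rule has_derivative_eq_rhs)
     apply (rule derivative_eq_intros sig_has_der | simp)+
    apply (rule ext)
    apply (simp add: inner_sum_right inner_sum_left sum_distrib_left algebra_simps inner_commute)
    done
qed


theorem lemma9: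
  fixes N :: nat and phi :: "nat \<Rightarrow> real^'d" and \<theta>s \<theta> :: "real^'d"
  assumes "\<exists>i<N. phi i \<noteq> 0"
  shows "\<exists>D. GDERIV (loss N phi \<theta>s) \<theta> :> D \<and>
    norm D \<ge> 8 * u_min N phi \<theta> * min (u_min N phi \<theta>) (u_min N phi \<theta>s)
              * sqrt (min_pos_eigenvalue (second_moment N phi))
              * sqrt ((1 / real N) * (\<Sum>i<N. (sigmoid (phi i \<bullet> \<theta>) - sigmoid (phi i \<bullet> \<theta>s))\<^sup>2))"
proof -
  have Npos: "N > 0" using assms by auto
  define a where "a i = sigmoid (phi i \<bullet> \<theta>) - sigmoid (phi i \<bullet> \<theta>s)" for i
  define D where "D = (2 / real N) *\<^sub>R (\<Sum>i<N. (a i * sd (phi i \<bullet> \<theta>)) *\<^sub>R phi i)"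
  have gd: "GDERIV (loss N phi \<theta>s) \<theta> :> D" unfolding D_def a_def by (rule loss_gderiv)
  define u where "u = u_min N phi \<theta>"
  define v where "v = u_min N phi \<theta>s"
  have umin: "u_min N phi t \<le> sd (phi i \<bullet> t)" if "i < N" for i t
    unfolding u_min_def sd_def using that by (intro Min_le) auto
  have unn: "0 \<le> u_min N phi t" for t
  proof -
    have "u_min N phi t \<in> (\<lambda>i. sd (phi i \<bullet> t)) ` {..<N}"
      unfolding u_min_def sd_def using Npos by (intro Min_in) auto
    then show ?thesis using sd_nonneg by auto
  qed
  define m where "m = u * min u v"
  have m0: "m \<ge> 0" unfolding m_def u_def v_def using unn by simp
  obtain d where d: "\<And>i. a i = d i * (phi i \<bullet> \<theta> - phi i \<bullet> \<theta>s) \<and>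
      min (sd (phi i \<bullet> \<theta>)) (sd (phi i \<bullet> \<theta>s)) \<le> d i \<and> d i \<le> 1/4"
  proof -
    have "\<forall>i. \<exists>d. a i = d * (phi i \<bullet> \<theta> - phi i \<bullet> \<theta>s) \<and>
      min (sd (phi i \<bullet> \<theta>)) (sd (phi i \<bullet> \<theta>s)) \<le> d \<and> d \<le> 1/4"
      unfolding a_def using sigmoid_diff by blast
    then show ?thesis using that by metis
  qed
  obtain \<delta> z where \<delta>V: "\<delta> \<in> span (phi ` {..<N})" and zo: "\<And>w. w \<in> span (phi ` {..<N}) \<Longrightarrow> orthogonal z w"
    and dec: "\<theta> - \<theta>s = \<delta> + z"
    using orthogonal_subspace_decomp_exists by metis
  define q where "q i = phi i \<bullet> \<delta>" for i
  have aq: "a i = d i * q i" if "i < N" for i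
  proof -
    have "orthogonal z (phi i)" using zo that by (auto intro: span_base)
    then have "phi i \<bullet> z = 0" by (simp add: orthogonal_def inner_commute)
    then have "phi i \<bullet> \<theta> - phi i \<bullet> \<theta>s = q i"
      unfolding q_def by (metis add.right_neutral dec inner_add_right inner_diff_right)
    then show ?thesis using d by simp
  qed
  have d0: "0 \<le> d i" for i using d[of i] sd_nonneg[of "phi i \<bullet> \<theta>"] sd_nonneg[of "phi i \<bullet> \<theta>s"] by linarith
  have em: "m \<le> d i * sd (phi i \<bullet> \<theta>)" if "i < N" for i
  proof -
    have "min u v \<le> d i" using d[of i] umin[OF that, of \<theta>] umin[OF that, of \<theta>s] unfolding u_def v_def by linarith
    moreover have "u \<le> sd (phi i \<bullet> \<theta>)" using umin[OF that] unfolding u_def .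
    ultimately show ?thesis unfolding m_def using unn[of \<theta>] unn[of \<theta>s] d0[of i]
      by (metis mult.commute mult_mono u_def v_def)
  qed
  define Q where "Q = (\<Sum>i<N. (q i)\<^sup>2)"
  define S where "S = (\<Sum>i<N. (a i)\<^sup>2)"
  have Q0: "Q \<ge> 0" unfolding Q_def by (simp add: sum_nonneg)
  have S0: "S \<ge> 0" unfolding S_def by (simp add: sum_nonneg)
  have SQ: "S \<le> Q / 16"
  proof -
    have "(a i)\<^sup>2 \<le> (q i)\<^sup>2 / 16" if "i < N" for i
    proof -
      have "(d i)\<^sup>2 \<le> (1/4)\<^sup>2" using d[of i] d0[of i] by (intro power_mono) auto
      then have "(d i)\<^sup>2 * (q i)\<^sup>2 \<le> (1/4)\<^sup>2 * (q i)\<^sup>2" by (intro mult_right_mono) auto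
      then show ?thesis using aq[OF that] by (simp add: power_mult_distrib power2_eq_square mult_ac)
    qed
    then have "S \<le> (\<Sum>i<N. (q i)\<^sup>2 / 16)" unfolding S_def by (intro sum_mono) auto
    also have "\<dots> = Q / 16" unfolding Q_def by (simp add: sum_divide_distrib)
    finally show ?thesis .
  qed
  have Dd: "D \<bullet> \<delta> \<ge> (2 / real N) * m * Q"
  proof -
    have "D \<bullet> \<delta> = (2 / real N) * (\<Sum>i<N. (d i * sd (phi i \<bullet> \<theta>)) * (q i)\<^sup>2)"
      unfolding D_def using aq by (simp add: inner_sum_left q_def power2_eq_square algebra_simps)
    moreover have "(\<Sum>i<N. m * (q i)\<^sup>2) \<le> (\<Sum>i<N. (d i * sd (phi i \<bullet> \<theta>)) * (q i)\<^sup>2)"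
      using em by (intro sum_mono mult_right_mono) auto
    then have "m * Q \<le> (\<Sum>i<N. (d i * sd (phi i \<bullet> \<theta>)) * (q i)\<^sup>2)"
      unfolding Q_def sum_distrib_left .
    then have "(2 / real N) * (m * Q) \<le> (2 / real N) * (\<Sum>i<N. (d i * sd (phi i \<bullet> \<theta>)) * (q i)\<^sup>2)"
      by (rule mult_left_mono) simp
    with \<open>D \<bullet> \<delta> = _\<close> show ?thesis by (simp only: mult.assoc)
  qed
  obtain \<mu> where mu: "\<mu> > 0" "is_eigenvalue (second_moment N phi) (\<mu> / real N)"
    and ray: "\<And>x. x \<in> span (phi ` {..<N}) \<Longrightarrow> \<mu> * (norm x)\<^sup>2 \<le> (\<Sum>i<N. (phi i \<bullet> x)\<^sup>2)"
    using rayleigh[OF assms] by blast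
  define L where "L = min_pos_eigenvalue (second_moment N phi)"
  have Lset: "\<mu> / real N \<in> {l. l > 0 \<and> is_eigenvalue (second_moment N phi) l}"
    using mu Npos by simp
  have L1: "L \<le> \<mu> / real N" unfolding L_def min_pos_eigenvalue_def
    by (rule cInf_lower[OF Lset]) (auto intro: bdd_belowI[of _ 0])
  have L0: "L \<ge> 0" unfolding L_def min_pos_eigenvalue_def
    using Lset by (intro cInf_greatest) auto
  have rayd: "\<mu> * (norm \<delta>)\<^sup>2 \<le> Q" using ray[OF \<delta>V] unfolding Q_def q_def .
  have step1: "8 * u * min u v * sqrt L * sqrt ((1 / real N) * S) \<le> 2 * m * sqrt (\<mu> * Q) / real N"
  proof -
    have "8 * u * min u v * sqrt L * sqrt ((1 / real N) * S) = 8 * m * (sqrt L * sqrt ((1 / real N) * S))"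
      unfolding m_def by simp
    also have "\<dots> \<le> 8 * m * (sqrt (\<mu> / real N) * sqrt ((1 / real N) * (Q / 16)))"
      using m0 L0 L1 SQ Npos S0 by (intro mult_left_mono mult_mono real_sqrt_le_mono) auto
    also have "sqrt (\<mu> / real N) * sqrt ((1 / real N) * (Q / 16)) = sqrt (\<mu> * Q) / (4 * real N)"
    proof -
      have "sqrt (\<mu> / real N) * sqrt ((1 / real N) * (Q / 16)) = sqrt ((\<mu> * Q) / (4 * real N)\<^sup>2)"
        by (simp add: real_sqrt_mult[symmetric] power2_eq_square field_simps)
      also have "\<dots> = sqrt (\<mu> * Q) / sqrt ((4 * real N)\<^sup>2)" by (rule real_sqrt_divide)
      also have "sqrt ((4 * real N)\<^sup>2) = 4 * real N" by (simp only: real_sqrt_abs)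
      finally show ?thesis .
    qed
    finally show ?thesis by simp
  qed
  have step2: "2 * m * sqrt (\<mu> * Q) / real N \<le> norm D"
  proof (cases "\<delta> = 0")
    case True
    then have "Q = 0" unfolding Q_def q_def by simp
    then show ?thesis by simp
  next
    case False
    define n where "n = norm \<delta>"
    have n0: "n > 0" using False unfolding n_def by simp
    have "(2 / real N) * m * Q \<le> norm D * n" using Dd norm_cauchy_schwarz[of D \<delta>] unfolding n_def by linarith
    then have "((2 / real N) * m * Q) / n \<le> norm D" using n0 by (subst pos_divide_le_eq) (auto simp: mult.commute)
    then have A: "(2 / real N) * m * (Q / n) \<le> norm D" by simp
    have "\<mu> * Q \<le> (Q / n)\<^sup>2"
    proof -
      have "\<mu> * n\<^sup>2 * Q \<le> Q * Q" using rayd Q0 unfolding n_def by (intro mult_right_mono) auto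
      then show ?thesis using n0 by (simp add: field_simps power2_eq_square)
    qed
    then have "sqrt (\<mu> * Q) \<le> Q / n" using Q0 n0 by (metis real_sqrt_le_mono real_sqrt_abs abs_of_nonneg divide_nonneg_pos)
    then have "(2 / real N) * m * sqrt (\<mu> * Q) \<le> (2 / real N) * m * (Q / n)"
      using m0 by (intro mult_left_mono) auto
    with A show ?thesis by simp
  qed
  show ?thesis
    apply (intro exI[of _ D] conjI gd)
    using step1 step2 unfolding u_def v_def L_def S_def a_def by linarith
qed

end
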